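(* Let $E$ be a Hermite–Biehler entire function with no real zeros whose phase function satisfies $\varphi'\in L^\infty(\mathbb{R})$. There exists $\delta>0$, depending only on $\lVert\varphi'\rVert_\infty$, such that for every $\xi\in\mathbb{R}$ and every $\alpha\in[0,\pi)$ with $\lvert A_\alpha(\xi)\rvert=\lvert E(\xi)\rvert$ there is an interval $I=(a,b)$ containing $\xi$ with $\xi-a>\delta$, $b-\xi>\delta$, and $$\left\lvert\frac{A_\alpha(x)}{E(x)}\right\rvert^2\ge\frac12,\qquad x\in I.$$
   Context: An entire function $E$ is Hermite–Biehler if $\lvert E(\overline{z})\rvert < \lvert E(z)\rvert$ for $z$ in the upper half-plane $\mathbb{C}_+$. Let $E^{\#}(z)=\overline{E(\overline z)}$; the phase function $\varphi$ is a smooth real function on $\mathbb{R}$ with $E^{\#}(x)/E(x)=e^{i\varphi(x)}$ (equivalently $\varphi=-2\arg E$ on $\mathbb{R}$). For $\alpha\in\mathbb{R}$, $A_\alpha=(e^{i\alpha}E+e^{-i\alpha}E^{\#})/2$ is the real part of $e^{i\alpha}E$. *)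

theory Defs
  imports "HOL-Complex_Analysis.Complex_Analysis"
begin

definition hermite_biehler :: "(complex \<Rightarrow> complex) \<Rightarrow> bool" where
  "hermite_biehler E \<longleftrightarrow> E holomorphic_on UNIV \<and>
     (\<forall>z. Im z > 0 \<longrightarrow> cmod (E (cnj z)) < cmod (E z))"

definition sharp :: "(complex \<Rightarrow> complex) \<Rightarrow> complex \<Rightarrow> complex" where
  "sharp E z = cnj (E (cnj z))"

definition A_alpha :: "(complex \<Rightarrow> complex) \<Rightarrow> real \<Rightarrow> complex \<Rightarrow> complex" where
  "A_alpha E \<alpha> z = (cis \<alpha> * E z + cis (-\<alpha>) * sharp E z) / 2"

end

theory Submission
  imports Defs
begin

lemma ratio_sq:
  assumes "E (complex_of_real x) \<noteq> 0"
    and "sharp E (complex_of_real x) / E (complex_of_real x) = cis p"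
  shows "(cmod (A_alpha E \<alpha> (complex_of_real x) / E (complex_of_real x)))\<^sup>2 = (2 + 2 * cos (p - 2*\<alpha>)) / 4"
proof -
  let ?e = "E (complex_of_real x)"
  have sh: "sharp E (complex_of_real x) = cis p * ?e" using assms by (simp add: field_simps)
  have "A_alpha E \<alpha> (complex_of_real x) / ?e = (cis \<alpha> + cis (-\<alpha>) * cis p) / 2"
    using assms(1) unfolding A_alpha_def sh by (simp add: field_simps)
  also have "\<dots> = cis \<alpha> * (1 + cis (p - 2*\<alpha>)) / 2"
  proof -
    have "cis \<alpha> * cis (p - 2*\<alpha>) = cis (-\<alpha>) * cis p" by (simp add: cis_mult)
    then show ?thesis by (simp add: distrib_left)
  qed
  finally have eq: "A_alpha E \<alpha> (complex_of_real x) / ?e = cis \<alpha> * (1 + cis (p - 2*\<alpha>)) / 2" .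
  have "(cmod (1 + cis (p - 2*\<alpha>)))\<^sup>2 = (1 + cos (p - 2*\<alpha>))\<^sup>2 + (sin (p - 2*\<alpha>))\<^sup>2"
    by (simp add: cmod_power2)
  also have "\<dots> = 2 + 2 * cos (p - 2*\<alpha>)"
    using sin_cos_squared_add[of "p - 2*\<alpha>"] by (simp add: power2_eq_square algebra_simps)
  finally have "(cmod (1 + cis (p - 2*\<alpha>)))\<^sup>2 = 2 + 2 * cos (p - 2*\<alpha>)" .
  then show ?thesis unfolding eq by (simp add: norm_mult norm_divide power_divide)
qed

theorem lemma7:
  fixes M :: real
  shows "\<exists>\<delta>>0. \<forall>(E :: complex \<Rightarrow> complex) (\<phi> :: real \<Rightarrow> real) (\<phi>' :: real \<Rightarrow> real).
     hermite_biehler E \<and>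
     (\<forall>x::real. E (complex_of_real x) \<noteq> 0) \<and>
     (\<forall>x. (\<phi> has_real_derivative \<phi>' x) (at x)) \<and>
     (\<forall>x::real. sharp E (complex_of_real x) / E (complex_of_real x) = cis (\<phi> x)) \<and>
     bounded (range \<phi>') \<and> (SUP x. \<bar>\<phi>' x\<bar>) = M
     \<longrightarrow> (\<forall>\<xi>::real. \<forall>\<alpha>\<in>{0..<pi}.
            cmod (A_alpha E \<alpha> (complex_of_real \<xi>)) = cmod (E (complex_of_real \<xi>)) \<longrightarrow>
            (\<exists>a b. \<xi> - a > \<delta> \<and> b - \<xi> > \<delta> \<and>
               (\<forall>x\<in>{a<..<b}. (cmod (A_alpha E \<alpha> (complex_of_real x) / E (complex_of_real x)))\<^sup>2 \<ge> 1/2)))"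
proof (rule exI[of _ "1 / (4 * (\<bar>M\<bar> + 1))"], intro conjI allI impI ballI)
  define \<delta> where "\<delta> = 1 / (4 * (\<bar>M\<bar> + 1))"
  show "0 < 1 / (4 * (\<bar>M\<bar> + 1))" by (simp add: add_pos_nonneg)
  fix E :: "complex \<Rightarrow> complex" and \<phi> \<phi>' :: "real \<Rightarrow> real" and \<xi> \<alpha> :: real
  assume H: "hermite_biehler E \<and>
     (\<forall>x::real. E (complex_of_real x) \<noteq> 0) \<and>
     (\<forall>x. (\<phi> has_real_derivative \<phi>' x) (at x)) \<and>
     (\<forall>x::real. sharp E (complex_of_real x) / E (complex_of_real x) = cis (\<phi> x)) \<and>
     bounded (range \<phi>') \<and> (SUP x. \<bar>\<phi>' x\<bar>) = M"
    and "\<alpha> \<in> {0..<pi}"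
    and at\<xi>: "cmod (A_alpha E \<alpha> (complex_of_real \<xi>)) = cmod (E (complex_of_real \<xi>))"
  have nz: "\<And>x. E (complex_of_real x) \<noteq> 0" using H by blast
  have sh: "\<And>x. sharp E (complex_of_real x) / E (complex_of_real x) = cis (\<phi> x)" using H by blast
  have der: "\<And>x. (\<phi> has_real_derivative \<phi>' x) (at x)" using H by blast
  from H have "bounded (range \<phi>')" by blast
  then obtain B where B: "\<And>x. norm (\<phi>' x) \<le> B" by (auto simp: bounded_iff)
  have bdd: "bdd_above (range (\<lambda>x. \<bar>\<phi>' x\<bar>))" using B by (auto intro!: bdd_aboveI2)
  have bndM: "\<And>x. \<bar>\<phi>' x\<bar> \<le> \<bar>M\<bar>"
  proof -
    fix x
    have "\<bar>\<phi>' x\<bar> \<le> (SUP x. \<bar>\<phi>' x\<bar>)" by (rule cSUP_upper[OF _ bdd]) simp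
    then show "\<bar>\<phi>' x\<bar> \<le> \<bar>M\<bar>" using H by simp
  qed
  have lip: "\<bar>\<phi> x - \<phi> \<xi>\<bar> \<le> \<bar>M\<bar> * \<bar>x - \<xi>\<bar>" for x
  proof (cases "x = \<xi>")
    case True then show ?thesis by simp
  next
    case False
    show ?thesis
    proof (cases "x < \<xi>")
      case True
      from MVT2[OF True, of \<phi> \<phi>'] der obtain z where "\<phi> \<xi> - \<phi> x = (\<xi> - x) * \<phi>' z" by blast
      then have "\<bar>\<phi> x - \<phi> \<xi>\<bar> = \<bar>x - \<xi>\<bar> * \<bar>\<phi>' z\<bar>" by (simp add: abs_mult abs_minus_commute)
      also have "\<dots> \<le> \<bar>x - \<xi>\<bar> * \<bar>M\<bar>" by (rule mult_left_mono[OF bndM]) simp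
      finally show ?thesis by (simp add: mult.commute)
    next
      case F: False
      with False have "\<xi> < x" by simp
      from MVT2[OF this, of \<phi> \<phi>'] der obtain z where "\<phi> x - \<phi> \<xi> = (x - \<xi>) * \<phi>' z" by blast
      then have "\<bar>\<phi> x - \<phi> \<xi>\<bar> = \<bar>x - \<xi>\<bar> * \<bar>\<phi>' z\<bar>" by (simp add: abs_mult)
      also have "\<dots> \<le> \<bar>x - \<xi>\<bar> * \<bar>M\<bar>" by (rule mult_left_mono[OF bndM]) simp
      finally show ?thesis by (simp add: mult.commute)
    qed
  qed
  have r\<xi>: "(cmod (A_alpha E \<alpha> (complex_of_real \<xi>) / E (complex_of_real \<xi>)))\<^sup>2 = 1"
    using at\<xi> nz[of \<xi>] by (simp add: norm_divide)
  have c1: "cos (\<phi> \<xi> - 2*\<alpha>) = 1" using r\<xi> ratio_sq[OF nz[of \<xi>] sh[of \<xi>], where \<alpha>=\<alpha>] by simp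
  have s0: "sin (\<phi> \<xi> - 2*\<alpha>) = 0" using sin_cos_squared_add[of "\<phi> \<xi> - 2*\<alpha>"] c1 by simp
  have dpos: "\<delta> > 0" unfolding \<delta>_def by (simp add: add_pos_nonneg)
  show "\<exists>a b. \<xi> - a > 1 / (4 * (\<bar>M\<bar> + 1)) \<and> b - \<xi> > 1 / (4 * (\<bar>M\<bar> + 1)) \<and>
               (\<forall>x\<in>{a<..<b}. (cmod (A_alpha E \<alpha> (complex_of_real x) / E (complex_of_real x)))\<^sup>2 \<ge> 1/2)"
  proof (rule exI[of _ "\<xi> - 2*\<delta>"], rule exI[of _ "\<xi> + 2*\<delta>"], intro conjI ballI)
    have dd: "2 * \<delta> > \<delta>" using dpos by simp
    show "\<xi> - (\<xi> - 2 * \<delta>) > 1 / (4 * (\<bar>M\<bar> + 1))" using dd unfolding \<delta>_def by simp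
    show "\<xi> + 2 * \<delta> - \<xi> > 1 / (4 * (\<bar>M\<bar> + 1))" using dd unfolding \<delta>_def by simp
    fix x assume x: "x \<in> {\<xi> - 2 * \<delta><..<\<xi> + 2 * \<delta>}"
    have "\<bar>x - \<xi>\<bar> \<le> 2 * \<delta>" using x by auto
    then have "\<bar>M\<bar> * \<bar>x - \<xi>\<bar> \<le> \<bar>M\<bar> * (2 * \<delta>)" by (simp add: mult_left_mono)
    also have "\<dots> \<le> 1/2" unfolding \<delta>_def by (simp add: field_simps)
    finally have d: "\<bar>\<phi> x - \<phi> \<xi>\<bar> \<le> 1/2" using lip[of x] by linarith
    have "\<phi> x - 2*\<alpha> = (\<phi> \<xi> - 2*\<alpha>) + (\<phi> x - \<phi> \<xi>)" by simp
    then have "cos (\<phi> x - 2*\<alpha>) = cos (\<phi> x - \<phi> \<xi>)"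
      by (metis cos_add c1 s0 mult_1 mult_zero_left diff_zero)
    also have "\<dots> \<ge> 0" proof (rule cos_ge_zero)
      have "\<phi> x - \<phi> \<xi> \<le> 1/2" "-(1/2) \<le> \<phi> x - \<phi> \<xi>" using abs_le_D1[OF d] abs_le_D2[OF d] by linarith+
      then show "- (pi / 2) \<le> \<phi> x - \<phi> \<xi>" "\<phi> x - \<phi> \<xi> \<le> pi / 2" using pi_gt3 by linarith+
    qed
    finally have "cos (\<phi> x - 2*\<alpha>) \<ge> 0" .
    then show "(cmod (A_alpha E \<alpha> (complex_of_real x) / E (complex_of_real x)))\<^sup>2 \<ge> 1/2"
      using ratio_sq[OF nz[of x] sh[of x], where \<alpha>=\<alpha>] by simp
  qed
qed

end
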